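(* Let $\circ$ be an alternative operation on $V=\mathbb{F}_2^m$ (in the sense of the context). Then for every $\lambda\in H_\circ$ one has $W_\circ\lambda=W_\circ$ and $U_\circ\lambda=U_\circ$.
   Context: Vectors of $V=\mathbb{F}_2^m$ are row vectors and maps are written in postfix notation ($xf$ is the image of $x$ under $f$). $+$ denotes the usual (xor) addition. An alternative operation on $V$ is defined from an elementary abelian $2$-subgroup $T<\mathrm{AGL}(V,+)$ acting regularly on $V$: writing $\tau_a$ for the unique element of $T$ with $0\tau_a=a$, set $a\circ b:=a\tau_b$; then $(V,\circ)$ is an elementary abelian $2$-group whose translation group is $T_\circ=T$. $\mathrm{AGL}(V,\circ)$ denotes the normaliser of $T_\circ$ in $\mathrm{Sym}(V)$ and $\mathrm{GL}(V,\circ)$ its stabiliser of $0$. It is assumed that the xor-translation group $T_+=\{x\mapsto x+a : a\in V\}$ is contained in $\mathrm{AGL}(V,\circ)$. The weak key space is $W_\circ=\{k\in V : x\circ k=x+k \text{ for all } x\in V\}$. The product is $a\cdot b:=a+b+a\circ b$ and the error space is $U_\circ=\{a\cdot b: a,b\in V\}$. Finally $H_\circ:=\mathrm{GL}(V,+)\cap\mathrm{GL}(V,\circ)$, i.e. the xor-linear bijections $f$ with $(a\circ b)f=af\circ bf$ for all $a,b$. *)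

theory Defs
  imports Main
begin

text \<open>V = F_2^m is modelled as the type 'n \<Rightarrow> bool with 'n a finite type, m = CARD('n);
  a vector is its coordinate function, True meaning 1.\<close>

type_synonym 'n vec2 = "'n \<Rightarrow> bool"

definition vadd :: "'n vec2 \<Rightarrow> 'n vec2 \<Rightarrow> 'n vec2" where
  "vadd a b = (\<lambda>i. a i \<noteq> b i)"

definition vzero :: "'n vec2" where
  "vzero = (\<lambda>i. False)"

text \<open>xor-linear maps (over F_2, additivity is linearity).\<close>
definition xlinear :: "('n vec2 \<Rightarrow> 'n vec2) \<Rightarrow> bool" where
  "xlinear f \<longleftrightarrow> (\<forall>a b. f (vadd a b) = vadd (f a) (f b))"

definition affine_map :: "('n vec2 \<Rightarrow> 'n vec2) \<Rightarrow> bool" where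
  "affine_map g \<longleftrightarrow> (\<exists>L c. xlinear L \<and> bij L \<and> g = (\<lambda>x. vadd (L x) c))"

definition alt_translation_group :: "('n vec2 \<Rightarrow> 'n vec2) set \<Rightarrow> bool" where
  "alt_translation_group T \<longleftrightarrow>
     (\<forall>t\<in>T. affine_map t) \<and> id \<in> T \<and>
     (\<forall>s\<in>T. \<forall>t\<in>T. s \<circ> t \<in> T) \<and>
     (\<forall>t\<in>T. t \<circ> t = id) \<and>
     (\<forall>s\<in>T. \<forall>t\<in>T. s \<circ> t = t \<circ> s) \<and>
     (\<forall>x y. \<exists>!t. t \<in> T \<and> t x = y)"

definition tau :: "('n vec2 \<Rightarrow> 'n vec2) set \<Rightarrow> 'n vec2 \<Rightarrow> ('n vec2 \<Rightarrow> 'n vec2)" where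
  "tau T a = (THE t. t \<in> T \<and> t vzero = a)"

text \<open>a \<circ> b := a \<tau>_b (postfix application).\<close>
definition circ :: "('n vec2 \<Rightarrow> 'n vec2) set \<Rightarrow> 'n vec2 \<Rightarrow> 'n vec2 \<Rightarrow> 'n vec2" where
  "circ T a b = tau T b a"

definition xor_translation :: "'n vec2 \<Rightarrow> ('n vec2 \<Rightarrow> 'n vec2)" where
  "xor_translation c = (\<lambda>x. vadd x c)"

text \<open>T_+ is contained in AGL(V,\<circ>), the normaliser of T in Sym(V).\<close>
definition xor_translations_normalise :: "('n vec2 \<Rightarrow> 'n vec2) set \<Rightarrow> bool" where
  "xor_translations_normalise T \<longleftrightarrow>
     (\<forall>c. (\<lambda>t. inv (xor_translation c) \<circ> t \<circ> xor_translation c) ` T = T)"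

definition weak_keys :: "('n vec2 \<Rightarrow> 'n vec2) set \<Rightarrow> 'n vec2 set" where
  "weak_keys T = {k. \<forall>x. circ T x k = vadd x k}"

definition error_space :: "('n vec2 \<Rightarrow> 'n vec2) set \<Rightarrow> 'n vec2 set" where
  "error_space T = {vadd (vadd a b) (circ T a b) | a b. True}"

definition H_circ :: "('n vec2 \<Rightarrow> 'n vec2) set \<Rightarrow> ('n vec2 \<Rightarrow> 'n vec2) set" where
  "H_circ T = {f. bij f \<and> xlinear f \<and> (\<forall>a b. f (circ T a b) = circ T (f a) (f b))}"

end

theory Submission
  imports Defs
begin

theorem lemma1:
  fixes T :: "(('n::finite) vec2 \<Rightarrow> 'n vec2) set" and lam :: "'n vec2 \<Rightarrow> 'n vec2"
  assumes "alt_translation_group T"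
    and "xor_translations_normalise T"
    and "lam \<in> H_circ T"
  shows "lam ` weak_keys T = weak_keys T \<and> lam ` error_space T = error_space T"
proof -
  have bj: "bij lam" and lin: "\<And>a b. lam (vadd a b) = vadd (lam a) (lam b)"
    and hc: "\<And>a b. lam (circ T a b) = circ T (lam a) (lam b)"
    using assms(3) unfolding H_circ_def xlinear_def by auto
  have inj: "inj lam" and sur: "\<And>y. lam (inv lam y) = y"
    using bj by (auto simp: bij_def surj_f_inv_f)
  have W1: "lam k \<in> weak_keys T" if "k \<in> weak_keys T" for k
  proof -
    have "circ T x (lam k) = vadd x (lam k)" for x
    proof -
      have "circ T x (lam k) = circ T (lam (inv lam x)) (lam k)" by (simp add: sur)
      also have "\<dots> = lam (circ T (inv lam x) k)" by (simp add: hc)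
      also have "\<dots> = lam (vadd (inv lam x) k)" using that by (simp add: weak_keys_def)
      also have "\<dots> = vadd x (lam k)" by (simp add: lin sur)
      finally show ?thesis .
    qed
    then show ?thesis by (simp add: weak_keys_def)
  qed
  have W2: "inv lam k \<in> weak_keys T" if "k \<in> weak_keys T" for k
  proof -
    have "circ T y (inv lam k) = vadd y (inv lam k)" for y
    proof -
      have "lam (circ T y (inv lam k)) = circ T (lam y) k" by (simp add: hc sur)
      also have "\<dots> = vadd (lam y) k" using that by (simp add: weak_keys_def)
      also have "\<dots> = lam (vadd y (inv lam k))" by (simp add: lin sur)
      finally show ?thesis using inj by (simp add: inj_eq)
    qed
    then show ?thesis by (simp add: weak_keys_def)
  qed
  have A: "lam ` weak_keys T = weak_keys T"
  proof
    show "lam ` weak_keys T \<subseteq> weak_keys T" using W1 by blast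
    show "weak_keys T \<subseteq> lam ` weak_keys T"
    proof
      fix k assume "k \<in> weak_keys T"
      then have "inv lam k \<in> weak_keys T" by (rule W2)
      then show "k \<in> lam ` weak_keys T" using sur by (metis image_eqI)
    qed
  qed
  have E: "lam (vadd (vadd a b) (circ T a b)) = vadd (vadd (lam a) (lam b)) (circ T (lam a) (lam b))" for a b
    by (simp add: lin hc)
  have B: "lam ` error_space T = error_space T"
  proof
    show "lam ` error_space T \<subseteq> error_space T"
      unfolding error_space_def using E by blast
    show "error_space T \<subseteq> lam ` error_space T"
    proof
      fix u assume "u \<in> error_space T"
      then obtain a b where u: "u = vadd (vadd a b) (circ T a b)" unfolding error_space_def by blast
      have "u = lam (vadd (vadd (inv lam a) (inv lam b)) (circ T (inv lam a) (inv lam b)))"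
        by (simp add: E sur u)
      moreover have "vadd (vadd (inv lam a) (inv lam b)) (circ T (inv lam a) (inv lam b)) \<in> error_space T"
        unfolding error_space_def by blast
      ultimately show "u \<in> lam ` error_space T" by blast
    qed
  qed
  show ?thesis using A B by blast
qed

end
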